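(* Let $X=\mathbb{R}^2$, $A=\mathbb{R}\times\{0\}$ and $B=\operatorname{epi}(|\cdot|+1)=\{(s,t)\in\mathbb{R}^2: t\ge |s|+1\}$, and let $T:=\mathrm{Id}-P_A+P_BR_A$. Then $A\cap B=\varnothing$, and for every starting point $x\in[-1,1]\times\{0\}$ and every $n\in\{1,2,\ldots\}$ one has $T^n x=(0,n)\in B$; in particular $\|P_BT^nx\|=n\to\infty$, so $(P_BT^nx)_{n}$ is unbounded.
   Context: $P_C$ is the Euclidean projection onto a closed convex set $C$, and $R_C=2P_C-\mathrm{Id}$. *)

theory Defs
  imports "HOL-Analysis.Analysis"
begin

definition proj :: "'a::euclidean_space set \<Rightarrow> 'a \<Rightarrow> 'a" where
  "proj C x = closest_point C x"

definition reflector :: "'a::euclidean_space set \<Rightarrow> 'a \<Rightarrow> 'a" where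
  "reflector C x = 2 *\<^sub>R proj C x - x"

end

theory Submission
  imports Defs
begin

lemma cp_strict:
  assumes "q \<in> S" "\<And>y. y \<in> S \<Longrightarrow> y \<noteq> q \<Longrightarrow> dist p q < dist p y"
  shows "closest_point S p = q"
  unfolding closest_point_def
proof (rule some_equality)
  show "q \<in> S \<and> (\<forall>y\<in>S. dist p q \<le> dist p y)"
    using assms by (metis order.order_iff_strict)
next
  fix x assume x: "x \<in> S \<and> (\<forall>y\<in>S. dist p x \<le> dist p y)"
  show "x = q"
  proof (rule ccontr)
    assume "x \<noteq> q"
    then have "dist p q < dist p x" using assms x by blast
    moreover have "dist p x \<le> dist p q" using x assms(1) by blast
    ultimately show False by simp
  qed
qed

lemma dist_sq_lt:
  fixes a b c d e f g h :: real
  assumes "(a-e)^2 + (b-f)^2 < (a-c)^2 + (b-d)^2"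
  shows "dist (a,b) (e,f) < dist (a,b) (c,d)"
  using assms by (simp add: dist_Pair_Pair dist_real_def)

lemma projA:
  assumes "A = {p. snd p = (0::real)}"
  shows "proj A (a::real, b) = (a, 0)"
  unfolding proj_def
proof (rule cp_strict)
  show "(a, 0::real) \<in> A" using assms by simp
  fix y assume "y \<in> A" "y \<noteq> (a, 0)"
  then obtain s where y: "y = (s, 0)" "s \<noteq> a" using assms by (cases y) auto
  have "(a-a)^2 + (b-0)^2 < (a-s)^2 + (b-0)^2" using y(2) by simp
  then show "dist (a, b) (a, 0) < dist (a, b) y" unfolding y(1) by (rule dist_sq_lt)
qed

lemma projB_vertex:
  assumes "B = {p. snd p \<ge> \<bar>fst p\<bar> + (1::real)}" "c \<le> 1 - \<bar>a\<bar>"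
  shows "proj B (a::real, c) = (0, 1)"
  unfolding proj_def
proof (rule cp_strict)
  show "(0, 1::real) \<in> B" using assms by simp
  fix y assume "y \<in> B" "y \<noteq> (0, 1)"
  then obtain s t where y: "y = (s, t)" "t \<ge> \<bar>s\<bar> + 1" "(s,t) \<noteq> (0,1)" using assms by (cases y) auto
  have q: "0 < s^2 + (t-1)^2" using y(3)
  proof -
    have "s \<noteq> 0 \<or> t - 1 \<noteq> 0" using y(3) by auto
    then show ?thesis by (metis sum_power2_gt_zero_iff)
  qed
  have "a * s \<le> abs a * abs s" by (metis abs_ge_self abs_mult)
  also have "abs a * abs s \<le> (1-c)*(t-1)" using assms(2) y(2)
    by (intro mult_mono) auto
  finally have "a * s \<le> (1-c)*(t-1)" .
  then have "(a-0)^2 + (c-1)^2 < (a-s)^2 + (c-t)^2" using q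
    by (simp add: power2_eq_square algebra_simps)
  then show "dist (a, c) (0, 1) < dist (a, c) y" unfolding y(1) by (rule dist_sq_lt)
qed

theorem mainTheorem3:
  fixes A B :: "(real \<times> real) set" and T :: "real \<times> real \<Rightarrow> real \<times> real"
  assumes A_def: "A = {p. snd p = 0}"
    and B_def: "B = {p. snd p \<ge> \<bar>fst p\<bar> + 1}"
    and T_def: "T = (\<lambda>x. x - proj A x + proj B (reflector A x))"
  shows "A \<inter> B = {} \<and>
    (\<forall>x \<in> {-1..1} \<times> {0}.
       (\<forall>n::nat. n \<ge> 1 \<longrightarrow> (T ^^ n) x = (0, real n) \<and> (0, real n) \<in> B) \<and>
       (\<forall>n::nat. n \<ge> 1 \<longrightarrow> norm (proj B ((T ^^ n) x)) = real n) \<and>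
       filterlim (\<lambda>n. norm (proj B ((T ^^ n) x))) at_top sequentially \<and>
       \<not> bounded (range (\<lambda>n. proj B ((T ^^ n) x))))"
proof -
  have AB: "A \<inter> B = {}" using A_def B_def by auto
  have inB: "(0, real n) \<in> B" if "n \<ge> 1" for n using B_def that by simp
  have pBn: "proj B (0, real n) = (0, real n)" if "n \<ge> 1" for n
    unfolding proj_def using inB[OF that] by (rule closest_point_self)
  have Tstep: "T (0, real (Suc n)) = (0, real (Suc (Suc n)))" for n
  proof -
    have "proj A (0, real (Suc n)) = (0, 0)" using projA[OF A_def] by simp
    then have r: "reflector A (0, real (Suc n)) = (0, - real (Suc n))"
      unfolding reflector_def by simp
    have "proj B (0, - real (Suc n)) = (0, 1)" by (rule projB_vertex[OF B_def]) simp
    then show ?thesis unfolding T_def using r \<open>proj A _ = _\<close> by simp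
  qed
  {
    fix x :: "real \<times> real" assume "x \<in> {-1..1} \<times> {0::real}"
    then obtain a :: real where x: "x = (a, 0)" "\<bar>a\<bar> \<le> 1" by auto
    have T1: "T x = (0, 1)"
    proof -
      have pa: "proj A x = x" using projA[OF A_def] x(1) by simp
      then have "reflector A x = x" unfolding reflector_def by (simp add: scaleR_2)
      moreover have "proj B x = (0,1)" unfolding x(1) by (rule projB_vertex[OF B_def]) (use x in simp)
      ultimately show ?thesis unfolding T_def using pa by simp
    qed
    have it: "(T ^^ Suc n) x = (0, real (Suc n))" for n
    proof (induction n)
      case 0 then show ?case using T1 by simp
    next
      case (Suc n) then show ?case using Tstep[of n] by simp
    qed
    have P1: "\<forall>n::nat. n \<ge> 1 \<longrightarrow> (T ^^ n) x = (0, real n) \<and> (0, real n) \<in> B"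
    proof (intro allI impI)
      fix n :: nat assume "n \<ge> 1"
      then obtain m where "n = Suc m" using not0_implies_Suc by fastforce
      then show "(T ^^ n) x = (0, real n) \<and> (0, real n) \<in> B" using it inB \<open>n \<ge> 1\<close> by blast
    qed
    have P2: "\<forall>n::nat. n \<ge> 1 \<longrightarrow> norm (proj B ((T ^^ n) x)) = real n"
      using P1 pBn by simp
    have ev: "eventually (\<lambda>n. real n = norm (proj B ((T ^^ n) x))) sequentially"
      using P2 eventually_sequentially by (metis (mono_tags))
    have P3: "filterlim (\<lambda>n. norm (proj B ((T ^^ n) x))) at_top sequentially"
      using filterlim_cong[OF refl refl ev] filterlim_real_sequentially by blast
    have P4: "\<not> bounded (range (\<lambda>n. proj B ((T ^^ n) x)))"
    proof
      assume "bounded (range (\<lambda>n. proj B ((T ^^ n) x)))"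
      then obtain M where M: "\<And>n. norm (proj B ((T ^^ n) x)) \<le> M"
        unfolding bounded_iff by blast
      define n where "n = Suc (nat \<lceil>M\<rceil>)"
      have "norm (proj B ((T ^^ n) x)) = real n" using P2 n_def by (metis le_add1 plus_1_eq_Suc)
      moreover have "real n > M" unfolding n_def by linarith
      ultimately show False using M[of n] by simp
    qed
    note P1 P2 P3 P4
  }
  then show ?thesis using AB by blast
qed

end
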